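(* For every integer $k\ge 2$ there exists a cubic graph $G$ with a proper $5$-edge-coloring $c$ such that $|N_G(c)|=k$.
   Context: Graphs are finite, undirected, loopless, and may contain parallel edges. A proper $5$-edge-coloring of $G$ is a map $c:E(G)\to\{1,\dots,5\}$ with adjacent edges receiving different colors. For such $c$ and a vertex $v$, $S_c(v)$ is the set of colors on edges incident to $v$. An edge $uv$ of a cubic graph is poor if $|S_c(u)\cup S_c(v)|=3$, rich if $|S_c(u)\cup S_c(v)|=5$, and abnormal if it is neither poor nor rich. $N_G(c)$ denotes the set of abnormal edges of $G$ with respect to $c$. *)

theory Defs
  imports Main
begin

text \<open>Parallel edges are distinct edges with the same endpoint set.\<close>
definition multigraph :: "'v set \<Rightarrow> 'e set \<Rightarrow> ('e \<Rightarrow> 'v set) \<Rightarrow> bool" where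
  "multigraph V E ends \<longleftrightarrow> finite V \<and> finite E \<and>
     (\<forall>e\<in>E. ends e \<subseteq> V \<and> card (ends e) = 2)"

definition incident_edges :: "'e set \<Rightarrow> ('e \<Rightarrow> 'v set) \<Rightarrow> 'v \<Rightarrow> 'e set" where
  "incident_edges E ends v = {e \<in> E. v \<in> ends e}"

definition cubic :: "'v set \<Rightarrow> 'e set \<Rightarrow> ('e \<Rightarrow> 'v set) \<Rightarrow> bool" where
  "cubic V E ends \<longleftrightarrow> multigraph V E ends \<and>
     (\<forall>v\<in>V. card (incident_edges E ends v) = 3)"

definition proper_5_edge_coloring :: "'e set \<Rightarrow> ('e \<Rightarrow> 'v set) \<Rightarrow> ('e \<Rightarrow> nat) \<Rightarrow> bool" where
  "proper_5_edge_coloring E ends c \<longleftrightarrow>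
     (\<forall>e\<in>E. c e \<in> {1..5}) \<and>
     (\<forall>e\<in>E. \<forall>f\<in>E. e \<noteq> f \<and> ends e \<inter> ends f \<noteq> {} \<longrightarrow> c e \<noteq> c f)"

definition color_set :: "'e set \<Rightarrow> ('e \<Rightarrow> 'v set) \<Rightarrow> ('e \<Rightarrow> nat) \<Rightarrow> 'v \<Rightarrow> nat set" where
  "color_set E ends c v = c ` incident_edges E ends v"

definition edge_colors_union :: "'e set \<Rightarrow> ('e \<Rightarrow> 'v set) \<Rightarrow> ('e \<Rightarrow> nat) \<Rightarrow> 'e \<Rightarrow> nat set" where
  "edge_colors_union E ends c e = (\<Union>v\<in>ends e. color_set E ends c v)"

definition poor_edge where
  "poor_edge E ends c e \<longleftrightarrow> card (edge_colors_union E ends c e) = 3"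

definition rich_edge where
  "rich_edge E ends c e \<longleftrightarrow> card (edge_colors_union E ends c e) = 5"

definition abnormal_edges :: "'e set \<Rightarrow> ('e \<Rightarrow> 'v set) \<Rightarrow> ('e \<Rightarrow> nat) \<Rightarrow> 'e set" where
  "abnormal_edges E ends c = {e \<in> E. \<not> poor_edge E ends c e \<and> \<not> rich_edge E ends c e}"

end

theory Submission
  imports Defs
begin


definition gEnds2 :: "nat \<Rightarrow> nat set" where
 "gEnds2 e = [{0,2},{0,3},{0,3},{1,2},{1,2},{1,3}] ! e"
definition gCol2 :: "nat \<Rightarrow> nat" where
 "gCol2 e = [1,2,3,2,4,1] ! e"

lemma g2_inc:
  "incident_edges {0,Suc 0,2,3,4,5} gEnds2 0 = {0,1,2}"
  "incident_edges {0,Suc 0,2,3,4,5} gEnds2 (Suc 0) = {3,4,5}"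
  "incident_edges {0,Suc 0,2,3,4,5} gEnds2 2 = {0,3,4}"
  "incident_edges {0,Suc 0,2,3,4,5} gEnds2 3 = {1,2,5}"
  by (auto simp: incident_edges_def gEnds2_def)

lemma g2_cubic: "cubic {0,1,2,3} {0,1,2,3,4,5} gEnds2"
  unfolding cubic_def multigraph_def
  by (auto simp: g2_inc gEnds2_def)

lemma g2_proper: "proper_5_edge_coloring {0,1,2,3,4,5} gEnds2 gCol2"
  unfolding proper_5_edge_coloring_def
  by (auto simp: gEnds2_def gCol2_def)

lemma g2_abn: "abnormal_edges {0,1,2,3,4,5} gEnds2 gCol2 = {0,5}"
  unfolding abnormal_edges_def poor_edge_def rich_edge_def edge_colors_union_def color_set_def
  by (auto simp: g2_inc gEnds2_def gCol2_def card_insert_if)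


definition gEnds3 :: "nat \<Rightarrow> nat set" where
 "gEnds3 e = [{0,4},{0,5},{0,5},{1,3},{1,4},{1,4},{2,3},{2,3},{2,5}] ! e"
definition gCol3 :: "nat \<Rightarrow> nat" where
 "gCol3 e = [1,2,3,1,2,4,2,5,1] ! e"

lemma g3_inc:
  "incident_edges {0,Suc 0,2,3,4,5,6,7,8} gEnds3 0 = {0,1,2}"
  "incident_edges {0,Suc 0,2,3,4,5,6,7,8} gEnds3 (Suc 0) = {3,4,5}"
  "incident_edges {0,Suc 0,2,3,4,5,6,7,8} gEnds3 2 = {6,7,8}"
  "incident_edges {0,Suc 0,2,3,4,5,6,7,8} gEnds3 3 = {3,6,7}"
  "incident_edges {0,Suc 0,2,3,4,5,6,7,8} gEnds3 4 = {0,4,5}"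
  "incident_edges {0,Suc 0,2,3,4,5,6,7,8} gEnds3 5 = {1,2,8}"
  by (auto simp: incident_edges_def gEnds3_def)

lemma g3_cubic: "cubic {0,1,2,3,4,5} {0,1,2,3,4,5,6,7,8} gEnds3"
  unfolding cubic_def multigraph_def
  by (auto simp: g3_inc gEnds3_def)

lemma g3_proper: "proper_5_edge_coloring {0,1,2,3,4,5,6,7,8} gEnds3 gCol3"
  unfolding proper_5_edge_coloring_def
  by (auto simp: gEnds3_def gCol3_def)

lemma g3_abn: "abnormal_edges {0,1,2,3,4,5,6,7,8} gEnds3 gCol3 = {0,3,8}"
  unfolding abnormal_edges_def poor_edge_def rich_edge_def edge_colors_union_def color_set_def
  by (auto simp: g3_inc gEnds3_def gCol3_def card_insert_if)



lemma iso_inc: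
  assumes "inj f" "inj g" "\<And>e. e \<in> E \<Longrightarrow> ends' (g e) = f ` ends e"
  shows "incident_edges (g ` E) ends' (f v) = g ` incident_edges E ends v"
  using assms unfolding incident_edges_def
  by (auto simp: inj_image_mem_iff)

lemma iso:
  assumes "inj f" "inj g" "\<And>e. e \<in> E \<Longrightarrow> ends' (g e) = f ` ends e"
    "\<And>e. e \<in> E \<Longrightarrow> c' (g e) = c e"
    "cubic V E ends" "proper_5_edge_coloring E ends c"
  shows "cubic (f ` V) (g ` E) ends' \<and> proper_5_edge_coloring (g ` E) ends' c' \<and>
         card (abnormal_edges (g ` E) ends' c') = card (abnormal_edges E ends c)"
proof -
  have inc: "\<And>v. incident_edges (g ` E) ends' (f v) = g ` incident_edges E ends v"
    using iso_inc[of f g E ends' ends] assms(1-3) by blast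
  have cs: "color_set (g ` E) ends' c' (f v) = color_set E ends c v" for v
  proof -
    have "color_set (g ` E) ends' c' (f v) = (c' \<circ> g) ` incident_edges E ends v"
      unfolding color_set_def inc by (simp add: image_comp)
    also have "\<dots> = color_set E ends c v"
      unfolding color_set_def using assms(4) by (auto simp: incident_edges_def)
    finally show ?thesis .
  qed
  have ecu: "edge_colors_union (g ` E) ends' c' (g e) = edge_colors_union E ends c e" if "e \<in> E" for e
    unfolding edge_colors_union_def using assms(3)[OF that] cs by simp
  have abn: "abnormal_edges (g ` E) ends' c' = g ` abnormal_edges E ends c"
    unfolding abnormal_edges_def poor_edge_def rich_edge_def using ecu by auto
  have cub: "cubic (f ` V) (g ` E) ends'"
    using assms(5) unfolding cubic_def multigraph_def
    using assms(1,2,3) inc by (auto simp: card_image inj_on_subset[OF assms(2)] card_image[OF inj_on_subset[OF assms(1)]] subset_iff)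
  have pr: "proper_5_edge_coloring (g ` E) ends' c'"
    using assms(6) unfolding proper_5_edge_coloring_def
    using assms(1,2,3,4) by (auto simp: inj_eq image_Int[symmetric])
  show ?thesis using cub pr abn by (simp add: card_image inj_on_subset[OF assms(2)])
qed

lemma union:
  assumes "cubic V1 E1 ends1" "proper_5_edge_coloring E1 ends1 c1"
    "cubic V2 E2 ends2" "proper_5_edge_coloring E2 ends2 c2"
    "V1 \<inter> V2 = {}" "E1 \<inter> E2 = {}"
  defines "ends \<equiv> \<lambda>e. if e \<in> E1 then ends1 e else ends2 e"
  defines "c \<equiv> \<lambda>e. if e \<in> E1 then c1 e else c2 e"
  shows "cubic (V1 \<union> V2) (E1 \<union> E2) ends \<and> proper_5_edge_coloring (E1 \<union> E2) ends c \<and>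
         card (abnormal_edges (E1 \<union> E2) ends c) = card (abnormal_edges E1 ends1 c1) + card (abnormal_edges E2 ends2 c2)"
proof -
  have m1: "\<And>e. e \<in> E1 \<Longrightarrow> ends1 e \<subseteq> V1" and m2: "\<And>e. e \<in> E2 \<Longrightarrow> ends2 e \<subseteq> V2"
    using assms(1,3) unfolding cubic_def multigraph_def by auto
  have fin: "finite E1" "finite E2" "finite V1" "finite V2"
    using assms(1,3) unfolding cubic_def multigraph_def by auto
  have inc1: "incident_edges (E1 \<union> E2) ends v = incident_edges E1 ends1 v" if "v \<in> V1" for v
    using that m2 assms(5,6) unfolding incident_edges_def ends_def by auto
  have inc2: "incident_edges (E1 \<union> E2) ends v = incident_edges E2 ends2 v" if "v \<in> V2" for v
    using that m1 assms(5,6) unfolding incident_edges_def ends_def by auto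
  have cs1: "color_set (E1 \<union> E2) ends c v = color_set E1 ends1 c1 v" if "v \<in> V1" for v
    unfolding color_set_def inc1[OF that] c_def by (auto simp: incident_edges_def)
  have cs2: "color_set (E1 \<union> E2) ends c v = color_set E2 ends2 c2 v" if "v \<in> V2" for v
    unfolding color_set_def inc2[OF that] c_def using assms(6) by (auto simp: incident_edges_def)
  have ecu1: "edge_colors_union (E1 \<union> E2) ends c e = edge_colors_union E1 ends1 c1 e" if "e \<in> E1" for e
    unfolding edge_colors_union_def using that m1[OF that] cs1 by (auto simp: ends_def)
  have ecu2: "edge_colors_union (E1 \<union> E2) ends c e = edge_colors_union E2 ends2 c2 e" if "e \<in> E2" for e
  proof -
    have "ends e = ends2 e" using that assms(6) by (auto simp: ends_def)
    moreover have "(\<Union>v\<in>ends2 e. color_set (E1 \<union> E2) ends c v) = (\<Union>v\<in>ends2 e. color_set E2 ends2 c2 v)"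
      by (rule SUP_cong) (use m2[OF that] cs2 in auto)
    ultimately show ?thesis
      unfolding edge_colors_union_def by simp
  qed
  have abn: "abnormal_edges (E1 \<union> E2) ends c = abnormal_edges E1 ends1 c1 \<union> abnormal_edges E2 ends2 c2"
    unfolding abnormal_edges_def poor_edge_def rich_edge_def using ecu1 ecu2 by auto
  have cub: "cubic (V1 \<union> V2) (E1 \<union> E2) ends"
    using assms(1,3,6) inc1 inc2 unfolding cubic_def multigraph_def by (auto simp: ends_def)
  have pr: "proper_5_edge_coloring (E1 \<union> E2) ends c"
  proof -
    have "ends e \<inter> ends f = {}" if "e \<in> E1" "f \<in> E2" for e f
      using that m1[OF that(1)] m2[OF that(2)] assms(5,6) by (auto simp: ends_def)
    then show ?thesis using assms(2,4,6) unfolding proper_5_edge_coloring_def ends_def c_def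
      by (smt (verit, ccfv_threshold) Int_commute Un_iff disjoint_iff)
  qed
  have "card (abnormal_edges E1 ends1 c1 \<union> abnormal_edges E2 ends2 c2) =
        card (abnormal_edges E1 ends1 c1) + card (abnormal_edges E2 ends2 c2)"
    by (rule card_Un_disjoint) (use fin assms(6) in \<open>auto simp: abnormal_edges_def\<close>)
  then show ?thesis using cub pr abn by simp
qed


lemma shift_disjoint:
  fixes V1 E1 :: "nat set" and V0 E0 :: "nat set" and ends0 :: "nat \<Rightarrow> nat set"
  assumes "finite V1" "finite E1" "cubic V0 E0 ends0" "proper_5_edge_coloring E0 ends0 c0"
  shows "\<exists>(V::nat set) (E::nat set) (ends::nat \<Rightarrow> nat set) (c::nat \<Rightarrow> nat).
           cubic V E ends \<and> proper_5_edge_coloring E ends c \<and>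
           card (abnormal_edges E ends c) = card (abnormal_edges E0 ends0 c0) \<and>
           V1 \<inter> V = {} \<and> E1 \<inter> E = {}"
proof -
  obtain s where s: "V1 \<subseteq> {..<s}" using assms(1) finite_nat_set_iff_bounded by (auto simp: subset_iff)
  obtain t where t: "E1 \<subseteq> {..<t}" using assms(2) finite_nat_set_iff_bounded by (auto simp: subset_iff)
  have i1: "inj ((+) s :: nat \<Rightarrow> nat)" "inj ((+) t :: nat \<Rightarrow> nat)" by (auto simp: inj_def)
  have r: "cubic ((+) s ` V0) ((+) t ` E0) (\<lambda>e. (+) s ` ends0 (e - t)) \<and>
      proper_5_edge_coloring ((+) t ` E0) (\<lambda>e. (+) s ` ends0 (e - t)) (\<lambda>e. c0 (e - t)) \<and>
      card (abnormal_edges ((+) t ` E0) (\<lambda>e. (+) s ` ends0 (e - t)) (\<lambda>e. c0 (e - t))) =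
      card (abnormal_edges E0 ends0 c0)"
    by (rule iso[OF i1]) (use assms in auto)
  have "V1 \<inter> (+) s ` V0 = {}" "E1 \<inter> (+) t ` E0 = {}" using s t by auto
  with r show ?thesis by blast
qed

lemma step:
  fixes V1 E1 :: "nat set" and V0 E0 :: "nat set" and ends0 :: "nat \<Rightarrow> nat set"
  assumes "cubic V1 E1 ends1" "proper_5_edge_coloring E1 ends1 c1"
    "cubic V0 E0 ends0" "proper_5_edge_coloring E0 ends0 c0"
  shows "\<exists>(V::nat set) (E::nat set) (ends::nat \<Rightarrow> nat set) (c::nat \<Rightarrow> nat).
           cubic V E ends \<and> proper_5_edge_coloring E ends c \<and>
           card (abnormal_edges E ends c) = card (abnormal_edges E1 ends1 c1) + card (abnormal_edges E0 ends0 c0)"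
proof -
  have "finite V1" "finite E1" using assms(1) unfolding cubic_def multigraph_def by auto
  from shift_disjoint[OF this assms(3,4)] obtain V2 E2 ends2 c2 where
    h: "cubic V2 E2 ends2" "proper_5_edge_coloring E2 ends2 c2"
    "card (abnormal_edges E2 ends2 c2) = card (abnormal_edges E0 ends0 c0)"
    "V1 \<inter> V2 = {}" "E1 \<inter> E2 = {}" by blast
  from union[OF assms(1,2) h(1,2,4,5)] h(3) show ?thesis by metis
qed

lemma main_aux:
  "k \<ge> 2 \<Longrightarrow> \<exists>(V::nat set) (E::nat set) (ends::nat \<Rightarrow> nat set) (c::nat \<Rightarrow> nat).
           cubic V E ends \<and> proper_5_edge_coloring E ends c \<and>
           card (abnormal_edges E ends c) = k"
proof (induction k rule: less_induct)
  case (less k)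
  have c2: "card (abnormal_edges {0,1,2,3,4,5} gEnds2 gCol2) = 2" by (subst g2_abn) simp
  have c3: "card (abnormal_edges {0,1,2,3,4,5,6,7,8} gEnds3 gCol3) = 3" by (subst g3_abn) simp
  consider "k = 2" | "k = 3" | "k \<ge> 4" using less.prems by linarith
  then show ?case
  proof cases
    case 1 then show ?thesis using g2_cubic g2_proper c2 by blast
  next
    case 2 then show ?thesis using g3_cubic g3_proper c3 by blast
  next
    case 3
    have "\<exists>(V::nat set) (E::nat set) (ends::nat \<Rightarrow> nat set) (c::nat \<Rightarrow> nat).
           cubic V E ends \<and> proper_5_edge_coloring E ends c \<and>
           card (abnormal_edges E ends c) = k - 2"
      using less.IH[of "k - 2"] 3 by simp
    then obtain V E ends c where h: "cubic (V::nat set) (E::nat set) (ends::nat \<Rightarrow> nat set)" "proper_5_edge_coloring E ends (c::nat \<Rightarrow> nat)"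
       "card (abnormal_edges E ends c) = k - 2"
      by blast
    from step[OF h(1,2) g2_cubic g2_proper] h(3) c2 3 show ?thesis by auto
  qed
qed

theorem mainTheorem7:
  fixes k :: nat
  assumes "k \<ge> 2"
  shows "\<exists>(V::nat set) (E::nat set) (ends::nat \<Rightarrow> nat set) (c::nat \<Rightarrow> nat).
           cubic V E ends \<and> proper_5_edge_coloring E ends c \<and>
           card (abnormal_edges E ends c) = k"
  using main_aux[OF assms] .

end
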